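(* Let $M$ be a partial multiplication matrix whose row-column graph has at least one cycle, and let $\pi^\natural$ be a gridded $M$-coil defined on a cycle of $G_M$ of length $\ell$. Let $\pi^\#$ be any other $M$-gridding of the underlying permutation $\pi$, and let $c_1,\dots,c_r$ be the non-empty cells of $\pi^\#$ that lie in some single row of cells, or in some single column of cells. If cell $c_i$ contains $k_i$ points ($1\le i\le r$) and $S_i=\sum_{j\ne i}k_j$, then $k_i\le 2\ell(S_i+1)$ for each $i$.
   Context: A gridding matrix has entries in $\{0,1,-1\}$; an $m\times n$ one has $m$ columns, $n$ rows, $M_{ij}$ in column $i$ from the left and row $j$ from the bottom. An $M$-gridding of a permutation $\pi$ of length $L$ is a choice of vertical lines $\tfrac12=v_0\le\dots\le v_m=L+\tfrac12$ and horizontal lines $\tfrac12=h_0\le\dots\le h_n=L+\tfrac12$, not through points of $\pi$, such that in each cell $C_{ij}=\{v_{i-1}<x<v_i,\ h_{j-1}<y<h_j\}$ the points of $\pi$ are absent if $M_{ij}=0$, increasing if $M_{ij}=1$, decreasing if $M_{ij}=-1$; this gives an $M$-gridded permutation. The row-column graph $G_M$ is the bipartite graph on $\{1,\dots,m\}\cup\{1',\dots,n'\}$ with edge $ij'$ iff $M_{ij}\neq0$ (so non-zero cells correspond to edges). $M$ is a partial multiplication matrix if there are fixed $c_1,\dots,c_m,r_1,\dots,r_n\in\{\pm1\}$ with $M_{ij}=c_ir_j$ for each non-zero entry. Column $i$ is oriented left-to-right if $c_i=1$, right-to-left otherwise; row $j$ bottom-to-top if $r_j=1$, top-to-bottom otherwise.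 The orientation digraph $D_{\pi^\#}$ of an $M$-gridded permutation has its points as vertices, with $x\to y$ whenever $x,y$ lie in a common column of cells and $x$ precedes $y$ in that column's orientation, or in a common row of cells and $x$ precedes $y$ in that row's orientation. A gridded $M$-coil on a cycle of $G_M$ of length $\ell$ is an $M$-gridded permutation of length $n>\ell$ with an ordering $v_1,\dots,v_n$ of its points and a labelling by $1,\dots,\ell$ of the $\ell$ cells corresponding to the edges of that cycle such that (C1) $v_i$ lies in cell $i\bmod\ell$ (residues in $\{1,\dots,\ell\}$); (C2) $v_{i-1}\to v_i$ for $1<i\le n$; (C3) $v_i\to v_{i-\ell-1}$ for $\ell+1<i\le n$; (C4) $v_{\ell+1}\to v_1$. *)

theory Defs
  imports Main
begin

text \<open>A permutation of length L is a bijection pi on {1..L}; its points are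
  (x, pi x) for x in {1..L}, identified with their x-coordinate x.
  A vertical line at position a + 1/2 (a a natural number, 0 \<le> a \<le> L) is encoded by a;
  so v : {0..m} -> {0..L}, v 0 = 0, v m = L, v monotone.  A point x lies strictly between the
  lines v (i-1) + 1/2 and v i + 1/2 iff v (i-1) < x \<le> v i.  Same for horizontal lines h.
  A gridding matrix with m columns and n rows is M :: nat => nat => int, entries M i j for
  1 \<le> i \<le> m (column), 1 \<le> j \<le> n (row).\<close>

definition gridding_matrix :: "nat \<Rightarrow> nat \<Rightarrow> (nat \<Rightarrow> nat \<Rightarrow> int) \<Rightarrow> bool" where
  "gridding_matrix m n M \<longleftrightarrow> (\<forall>i\<in>{1..m}. \<forall>j\<in>{1..n}. M i j \<in> {-1, 0, 1})"

definition is_perm :: "nat \<Rightarrow> (nat \<Rightarrow> nat) \<Rightarrow> bool" where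
  "is_perm L \<pi> \<longleftrightarrow> bij_betw \<pi> {1..L} {1..L}"

definition grid_lines :: "nat \<Rightarrow> nat \<Rightarrow> (nat \<Rightarrow> nat) \<Rightarrow> bool" where
  "grid_lines k L v \<longleftrightarrow> v 0 = 0 \<and> v k = L \<and> (\<forall>i<k. v i \<le> v (Suc i))"

definition in_col :: "(nat \<Rightarrow> nat) \<Rightarrow> nat \<Rightarrow> nat \<Rightarrow> bool" where
  "in_col v i x \<longleftrightarrow> v (i - 1) < x \<and> x \<le> v i"

definition in_row :: "(nat \<Rightarrow> nat) \<Rightarrow> (nat \<Rightarrow> nat) \<Rightarrow> nat \<Rightarrow> nat \<Rightarrow> bool" where
  "in_row h \<pi> j x \<longleftrightarrow> h (j - 1) < \<pi> x \<and> \<pi> x \<le> h j"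

definition in_cell :: "(nat \<Rightarrow> nat) \<Rightarrow> (nat \<Rightarrow> nat) \<Rightarrow> (nat \<Rightarrow> nat) \<Rightarrow> nat \<Rightarrow> nat \<Rightarrow> nat \<Rightarrow> bool" where
  "in_cell v h \<pi> i j x \<longleftrightarrow> in_col v i x \<and> in_row h \<pi> j x"

definition cell_pts :: "nat \<Rightarrow> (nat \<Rightarrow> nat) \<Rightarrow> (nat \<Rightarrow> nat) \<Rightarrow> (nat \<Rightarrow> nat) \<Rightarrow> nat \<Rightarrow> nat \<Rightarrow> nat set" where
  "cell_pts L v h \<pi> i j = {x \<in> {1..L}. in_cell v h \<pi> i j x}"

definition M_gridding :: "nat \<Rightarrow> nat \<Rightarrow> (nat \<Rightarrow> nat \<Rightarrow> int) \<Rightarrow> nat \<Rightarrow> (nat \<Rightarrow> nat)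
    \<Rightarrow> (nat \<Rightarrow> nat) \<Rightarrow> (nat \<Rightarrow> nat) \<Rightarrow> bool" where
  "M_gridding m n M L \<pi> v h \<longleftrightarrow> grid_lines m L v \<and> grid_lines n L h \<and>
     (\<forall>i\<in>{1..m}. \<forall>j\<in>{1..n}.
        (M i j = 0 \<longrightarrow> cell_pts L v h \<pi> i j = {}) \<and>
        (M i j = 1 \<longrightarrow> (\<forall>x\<in>cell_pts L v h \<pi> i j. \<forall>y\<in>cell_pts L v h \<pi> i j. x < y \<longrightarrow> \<pi> x < \<pi> y)) \<and>
        (M i j = -1 \<longrightarrow> (\<forall>x\<in>cell_pts L v h \<pi> i j. \<forall>y\<in>cell_pts L v h \<pi> i j. x < y \<longrightarrow> \<pi> x > \<pi> y)))"

definition partial_mult :: "nat \<Rightarrow> nat \<Rightarrow> (nat \<Rightarrow> nat \<Rightarrow> int) \<Rightarrow> (nat \<Rightarrow> int) \<Rightarrow> (nat \<Rightarrow> int) \<Rightarrow> bool" where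
  "partial_mult m n M c r \<longleftrightarrow> (\<forall>i\<in>{1..m}. c i \<in> {-1, 1}) \<and> (\<forall>j\<in>{1..n}. r j \<in> {-1, 1}) \<and>
     (\<forall>i\<in>{1..m}. \<forall>j\<in>{1..n}. M i j \<noteq> 0 \<longrightarrow> M i j = c i * r j)"

text \<open>Row-column graph G_M: vertices Inl i (column i) and Inr j (row j').\<close>
definition GM_edge :: "nat \<Rightarrow> nat \<Rightarrow> (nat \<Rightarrow> nat \<Rightarrow> int) \<Rightarrow> nat + nat \<Rightarrow> nat + nat \<Rightarrow> bool" where
  "GM_edge m n M a b \<longleftrightarrow>
     (\<exists>i\<in>{1..m}. \<exists>j\<in>{1..n}. M i j \<noteq> 0 \<and> ((a = Inl i \<and> b = Inr j) \<or> (a = Inr j \<and> b = Inl i)))"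

definition GM_cycle :: "nat \<Rightarrow> nat \<Rightarrow> (nat \<Rightarrow> nat \<Rightarrow> int) \<Rightarrow> nat \<Rightarrow> (nat \<Rightarrow> nat + nat) \<Rightarrow> bool" where
  "GM_cycle m n M l u \<longleftrightarrow> l \<ge> 3 \<and> inj_on u {..<l} \<and> (\<forall>k<l. GM_edge m n M (u k) (u (Suc k mod l)))"

fun edge_cell :: "nat + nat \<Rightarrow> nat + nat \<Rightarrow> nat \<times> nat" where
  "edge_cell (Inl i) (Inr j) = (i, j)"
| "edge_cell (Inr j) (Inl i) = (i, j)"
| "edge_cell _ _ = (0, 0)"

definition cycle_cells :: "nat \<Rightarrow> (nat \<Rightarrow> nat + nat) \<Rightarrow> (nat \<times> nat) set" where
  "cycle_cells l u = {edge_cell (u k) (u (Suc k mod l)) | k. k < l}"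

definition orient_arrow :: "nat \<Rightarrow> nat \<Rightarrow> (nat \<Rightarrow> int) \<Rightarrow> (nat \<Rightarrow> int) \<Rightarrow> nat \<Rightarrow> (nat \<Rightarrow> nat)
    \<Rightarrow> (nat \<Rightarrow> nat) \<Rightarrow> (nat \<Rightarrow> nat) \<Rightarrow> nat \<Rightarrow> nat \<Rightarrow> bool" where
  "orient_arrow m n c r L \<pi> v h x y \<longleftrightarrow> x \<in> {1..L} \<and> y \<in> {1..L} \<and>
     ((\<exists>i\<in>{1..m}. in_col v i x \<and> in_col v i y \<and> (if c i = 1 then x < y else y < x)) \<or>
      (\<exists>j\<in>{1..n}. in_row h \<pi> j x \<and> in_row h \<pi> j y \<and> (if r j = 1 then \<pi> x < \<pi> y else \<pi> y < \<pi> x)))"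

text \<open>(pi, v, h) with ordering ord of its points (v_i = ord i) and labelling lab of the cycle cells
  is a gridded M-coil on the cycle u of length l.  Residue of i mod l in {1..l} is (i-1) mod l + 1.\<close>
definition gridded_coil :: "nat \<Rightarrow> nat \<Rightarrow> (nat \<Rightarrow> nat \<Rightarrow> int) \<Rightarrow> (nat \<Rightarrow> int) \<Rightarrow> (nat \<Rightarrow> int)
    \<Rightarrow> nat \<Rightarrow> (nat \<Rightarrow> nat) \<Rightarrow> (nat \<Rightarrow> nat) \<Rightarrow> (nat \<Rightarrow> nat)
    \<Rightarrow> nat \<Rightarrow> (nat \<Rightarrow> nat + nat) \<Rightarrow> (nat \<Rightarrow> nat) \<Rightarrow> (nat \<Rightarrow> nat \<times> nat) \<Rightarrow> bool" where
  "gridded_coil m n M c r L \<pi> v h l u ord lab \<longleftrightarrow>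
     is_perm L \<pi> \<and> M_gridding m n M L \<pi> v h \<and> GM_cycle m n M l u \<and> L > l \<and>
     bij_betw lab {1..l} (cycle_cells l u) \<and> bij_betw ord {1..L} {1..L} \<and>
     (\<forall>i\<in>{1..L}. in_cell v h \<pi> (fst (lab ((i - 1) mod l + 1))) (snd (lab ((i - 1) mod l + 1))) (ord i)) \<and>
     (\<forall>i. 1 < i \<and> i \<le> L \<longrightarrow> orient_arrow m n c r L \<pi> v h (ord (i - 1)) (ord i)) \<and>
     (\<forall>i. l + 1 < i \<and> i \<le> L \<longrightarrow> orient_arrow m n c r L \<pi> v h (ord i) (ord (i - l - 1))) \<and>
     orient_arrow m n c r L \<pi> v h (ord (l + 1)) (ord 1)"

end

theory Submission
  imports Defs
begin

lemma mono_steps: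
  assumes "\<forall>i<k. v i \<le> v (Suc i)" "i \<le> j" "j \<le> k"
  shows "(v::nat\<Rightarrow>nat) i \<le> v j"
  using assms(2,3)
proof (induction j)
  case 0 then show ?case by simp
next
  case (Suc j)
  show ?case
  proof (cases "i = Suc j")
    case False
    then have "v i \<le> v j" using Suc by simp
    also have "v j \<le> v (Suc j)" using assms(1) Suc.prems by simp
    finally show ?thesis .
  qed simp
qed

lemma col_unique:
  assumes "\<forall>i<k. v i \<le> v (Suc i)" "i\<in>{1..k}" "i'\<in>{1..k}" "in_col v i a" "in_col v i' a"
  shows "i = i'"
proof (rule ccontr)
  assume ne: "i \<noteq> i'"
  have *: False if "i < i'" "i\<in>{1..k}" "i'\<in>{1..k}" "in_col v i a" "in_col v i' a" for i i'
  proof -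
    have "v i \<le> v (i' - 1)" using mono_steps[OF assms(1), of i "i'-1"] that by auto
    then show False using that unfolding in_col_def by auto
  qed
  show False using ne *[of i i'] *[of i' i] assms by (cases "i < i'") auto
qed

lemma col_order:
  assumes "\<forall>i<k. v i \<le> v (Suc i)" "i\<in>{1..k}" "i'\<in>{1..k}" "i < i'" "in_col v i a" "in_col v i' b"
  shows "a < b"
proof -
  have "v i \<le> v (i' - 1)" using mono_steps[OF assms(1), of i "i'-1"] assms by auto
  then show ?thesis using assms unfolding in_col_def by auto
qed

lemma col_exists:
  assumes "grid_lines k L v" "a \<in> {1..L}"
  shows "\<exists>i\<in>{1..k}. in_col v i a"
proof -
  have ex: "\<exists>j. j \<le> k \<and> a \<le> v j" using assms unfolding grid_lines_def by auto
  define j where "j = (LEAST j. j \<le> k \<and> a \<le> v j)"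
  have j1: "j \<le> k \<and> a \<le> v j" unfolding j_def by (rule LeastI_ex[OF ex])
  have j0: "j \<noteq> 0" using j1 assms unfolding grid_lines_def by (cases j) auto
  have "\<not> (j - 1 \<le> k \<and> a \<le> v (j - 1))"
    using not_less_Least[of "j-1" "\<lambda>j. j \<le> k \<and> a \<le> v j"] j0 unfolding j_def[symmetric] by auto
  then have "v (j-1) < a" using j1 by auto
  then show ?thesis using j1 j0 unfolding in_col_def by (intro bexI[of _ j]) auto
qed

definition arr :: "nat \<Rightarrow> nat \<Rightarrow> (nat\<Rightarrow>nat) \<Rightarrow> (nat\<Rightarrow>nat) \<Rightarrow> (nat\<Rightarrow>nat) \<Rightarrow> (nat\<Rightarrow>nat)
   \<Rightarrow> (nat\<Rightarrow>int) \<Rightarrow> (nat\<Rightarrow>int) \<Rightarrow> nat \<Rightarrow> nat \<Rightarrow> bool" where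
  "arr m n v h f g c r x y \<longleftrightarrow>
     (\<exists>i\<in>{1..m}. in_col v i (f x) \<and> in_col v i (f y) \<and> (if c i = 1 then f x < f y else f y < f x)) \<or>
     (\<exists>j\<in>{1..n}. in_col h j (g x) \<and> in_col h j (g y) \<and> (if r j = 1 then g x < g y else g y < g x))"

definition prec :: "int \<Rightarrow> nat \<Rightarrow> nat \<Rightarrow> bool" where
  "prec s a b \<longleftrightarrow> (if s = 1 then a < b else b < a)"

locale coilcore =
  fixes L l m n :: nat and ord :: "nat \<Rightarrow> nat" and lab :: "nat \<Rightarrow> nat \<times> nat"
    and v h f g :: "nat \<Rightarrow> nat" and c r :: "nat \<Rightarrow> int"
  assumes l3: "l \<ge> 3" and Ll: "L > l"
    and ordb: "bij_betw ord {1..L} {1..L}"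
    and labi: "inj_on lab {1..l}"
    and labr: "lab ` {1..l} \<subseteq> {1..m} \<times> {1..n}"
    and vm: "\<forall>i<m. v i \<le> v (Suc i)" and hm: "\<forall>j<n. h j \<le> h (Suc j)"
    and cells: "\<forall>j\<in>{1..L}. in_col v (fst (lab ((j-1) mod l + 1))) (f (ord j)) \<and>
                      in_col h (snd (lab ((j-1) mod l + 1))) (g (ord j))"
    and c2: "\<forall>i. 1 < i \<and> i \<le> L \<longrightarrow> arr m n v h f g c r (ord (i-1)) (ord i)"
    and c3: "\<forall>i. l+1 < i \<and> i \<le> L \<longrightarrow> arr m n v h f g c r (ord i) (ord (i-l-1))"
    and no3: "\<forall>q1\<in>{1..l}. \<forall>q2\<in>{1..l}. \<forall>q3\<in>{1..l}. q1\<noteq>q2 \<and> q1\<noteq>q3 \<and> q2\<noteq>q3 \<longrightarrow>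
               \<not>(snd(lab q1) = snd(lab q2) \<and> snd(lab q1) = snd(lab q3))"
begin

definition res :: "nat \<Rightarrow> nat" where "res j = (j - 1) mod l + 1"
definition nx :: "nat \<Rightarrow> nat" where "nx q = q mod l + 1"

lemma lpos: "l > 0" using l3 by simp

lemma res_range: "res j \<in> {1..l}"
  unfolding res_def using lpos by (auto simp: Suc_leI)

lemma res_add: "j \<ge> 1 \<Longrightarrow> res (j + d * l) = res j"
  unfolding res_def
  by (metis Nat.add_diff_assoc2 mod_mult_self1)

lemma res_suc: "j \<ge> 1 \<Longrightarrow> res (Suc j) = nx (res j)"
  unfolding res_def nx_def by (cases j) (auto simp: mod_Suc_eq)

lemma res_id: "q \<in> {1..l} \<Longrightarrow> res q = q"
  unfolding res_def by auto

lemma nx_range: "nx q \<in> {1..l}"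
  unfolding nx_def using lpos by (auto simp: Suc_leI)

lemma nx_inj: "p \<in> {1..l} \<Longrightarrow> q \<in> {1..l} \<Longrightarrow> nx p = nx q \<Longrightarrow> p = q"
  by (cases "p = l"; cases "q = l") (auto simp: nx_def)

abbreviation A where "A x y \<equiv> arr m n v h f g c r x y"
definition cl :: "nat \<Rightarrow> nat" where "cl j = fst (lab (res j))"
definition rw :: "nat \<Rightarrow> nat" where "rw j = snd (lab (res j))"

lemma lab_rng: "q \<in> {1..l} \<Longrightarrow> fst (lab q) \<in> {1..m} \<and> snd (lab q) \<in> {1..n}"
  using labr by force

lemma cell_j: "j \<in> {1..L} \<Longrightarrow> in_col v (cl j) (f (ord j)) \<and> in_col h (rw j) (g (ord j)) \<and>
   cl j \<in> {1..m} \<and> rw j \<in> {1..n}"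
  using cells lab_rng[OF res_range[of j]] unfolding cl_def rw_def res_def by auto

lemma arr_col:
  assumes "j1 \<in> {1..L}" "j2 \<in> {1..L}" "cl j1 = cl j2" "rw j1 \<noteq> rw j2" "A (ord j1) (ord j2)"
  shows "prec (c (cl j1)) (f (ord j1)) (f (ord j2))"
proof -
  note a = cell_j[OF assms(1)] cell_j[OF assms(2)]
  from assms(5) show ?thesis unfolding arr_def
  proof (elim disjE bexE conjE)
    fix i assume i: "i \<in> {1..m}" "in_col v i (f (ord j1))" "in_col v i (f (ord j2))"
      "(if c i = 1 then f (ord j1) < f (ord j2) else f (ord j2) < f (ord j1))"
    have "i = cl j1" using col_unique[OF vm i(1) _ i(2)] a by blast
    then show ?thesis using i(4) unfolding prec_def by simp
  next
    fix i assume i: "i \<in> {1..n}" "in_col h i (g (ord j1))" "in_col h i (g (ord j2))"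
    have "i = rw j1" using col_unique[OF hm i(1) _ i(2)] a by blast
    moreover have "i = rw j2" using col_unique[OF hm i(1) _ i(3)] a by blast
    ultimately show ?thesis using assms(4) by simp
  qed
qed

lemma arr_share:
  assumes "j1 \<in> {1..L}" "j2 \<in> {1..L}" "A (ord j1) (ord j2)"
  shows "cl j1 = cl j2 \<or> rw j1 = rw j2"
proof -
  note a = cell_j[OF assms(1)] cell_j[OF assms(2)]
  from assms(3) show ?thesis unfolding arr_def
  proof (elim disjE bexE conjE)
    fix i assume i: "i \<in> {1..m}" "in_col v i (f (ord j1))" "in_col v i (f (ord j2))"
    have "i = cl j1" using col_unique[OF vm i(1) _ i(2)] a by blast
    moreover have "i = cl j2" using col_unique[OF vm i(1) _ i(3)] a by blast
    ultimately show ?thesis by simp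
  next
    fix i assume i: "i \<in> {1..n}" "in_col h i (g (ord j1))" "in_col h i (g (ord j2))"
    have "i = rw j1" using col_unique[OF hm i(1) _ i(2)] a by blast
    moreover have "i = rw j2" using col_unique[OF hm i(1) _ i(3)] a by blast
    ultimately show ?thesis by simp
  qed
qed

lemma nx_eq: "q \<in> {1..l} \<Longrightarrow> nx q = (if q = l then 1 else Suc q)"
  unfolding nx_def by auto

lemma nx_ne: "q \<in> {1..l} \<Longrightarrow> nx q \<noteq> q"
  using l3 by (cases "q = l") (auto simp: nx_def)

lemma lab_share:
  assumes q: "q \<in> {1..l}"
  shows "lab q \<noteq> lab (nx q) \<and> (fst (lab q) = fst (lab (nx q)) \<or> snd (lab q) = snd (lab (nx q)))"
proof -
  have r1: "res q = q" using res_id[OF q] .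
  have r2: "res (Suc q) = nx q" using res_suc[of q] r1 q by simp
  have "A (ord (Suc q - 1)) (ord (Suc q))" using c2[rule_format, of "Suc q"] q Ll by auto
  then have "cl q = cl (Suc q) \<or> rw q = rw (Suc q)" using arr_share[of q "Suc q"] q Ll by auto
  then have "fst (lab q) = fst (lab (nx q)) \<or> snd (lab q) = snd (lab (nx q))"
    unfolding cl_def rw_def r1 r2 .
  moreover have "lab q \<noteq> lab (nx q)" using labi nx_ne[OF q] nx_range[of q] q
    by (metis inj_on_contraD)
  ultimately show ?thesis by simp
qed

lemma partner:
  assumes q: "q \<in> {1..l}"
  shows "\<exists>p\<in>{1..l}. (p = nx q \<or> nx p = q) \<and> fst (lab p) = fst (lab q) \<and> snd (lab p) \<noteq> snd (lab q)"
proof -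
  define p0 where "p0 = (if q = 1 then l else q - 1)"
  have p0: "p0 \<in> {1..l}" "nx p0 = q" using q l3 unfolding p0_def nx_def by auto
  have d: "p0 \<noteq> nx q" "p0 \<noteq> q" "q \<noteq> nx q" using q l3 unfolding p0_def nx_eq[OF q]
    by auto
  note s1 = lab_share[OF q] and s2 = lab_share[OF p0(1), unfolded p0(2)]
  show ?thesis
  proof (cases "fst (lab q) = fst (lab (nx q))")
    case True
    then have "snd (lab (nx q)) \<noteq> snd (lab q)" using s1 by (metis prod.expand)
    then show ?thesis using True nx_range[of q] by auto
  next
    case F1: False
    show ?thesis
    proof (cases "fst (lab p0) = fst (lab q)")
      case True
      then have "snd (lab p0) \<noteq> snd (lab q)" using s2 by (metis prod.expand)
      then show ?thesis using True p0 by auto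
    next
      case False
      then have "snd (lab q) = snd (lab (nx q))" "snd (lab p0) = snd (lab q)" using s1 s2 F1 by auto
      then show ?thesis using no3 q p0(1) nx_range[of q] d by metis
    qed
  qed
qed

lemma prec_trans: "prec s a b \<Longrightarrow> prec s b d \<Longrightarrow> prec s a d"
  unfolding prec_def by (auto split: if_splits)

lemma res_eq_diff:
  assumes "res s = res t" "1 \<le> s" "s < t"
  shows "\<exists>d\<ge>1. t = s + d * l"
proof -
  have "(s - 1) mod l = (t - 1) mod l" using assms(1) unfolding res_def by simp
  moreover have le: "s - 1 \<le> t - 1" using assms by simp
  ultimately have "l dvd (t - 1) - (s - 1)" using mod_eq_dvd_iff_nat[OF le, of l] by simp
  then obtain d where d: "(t - 1) - (s - 1) = l * d" by (auto elim: dvdE)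
  then have "t = s + d * l" using assms by (simp add: mult.commute)
  moreover have "d \<ge> 1" using d assms by (cases d) auto
  ultimately show ?thesis by blast
qed

lemma stepA:
  assumes q: "q \<in> {1..l}" and pq: "fst (lab (nx q)) = fst (lab q)" "snd (lab (nx q)) \<noteq> snd (lab q)"
    and j: "res j = q" "1 \<le> j" "j + l + 1 \<le> L"
  shows "prec (c (fst (lab q))) (f (ord (j+l))) (f (ord (j+l+1))) \<and>
         prec (c (fst (lab q))) (f (ord (j+l+1))) (f (ord j))"
proof -
  have r1: "res (j+l) = q" using res_add[of j 1] j by simp
  have r2: "res (j+l+1) = nx q" using res_suc[of "j+l"] r1 j by simp
  have a1: "A (ord (j+l+1-1)) (ord (j+l+1))" using c2[rule_format, of "j+l+1"] j by auto
  have a2: "A (ord (j+l+1)) (ord (j+l+1-l-1))" using c3[rule_format, of "j+l+1"] j by auto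
  have p1: "prec (c (cl (j+l))) (f (ord (j+l))) (f (ord (j+l+1)))"
    using arr_col[of "j+l" "j+l+1"] a1 j pq unfolding cl_def rw_def r1 r2 by auto
  have p2: "prec (c (cl (j+l+1))) (f (ord (j+l+1))) (f (ord j))"
    using arr_col[of "j+l+1" j] a2 j pq unfolding cl_def rw_def r2 by auto
  show ?thesis using p1 p2 unfolding cl_def r1 r2 pq by simp
qed

lemma chainA:
  assumes q: "q \<in> {1..l}" and pq: "fst (lab (nx q)) = fst (lab q)" "snd (lab (nx q)) \<noteq> snd (lab q)"
    and j: "res j = q" "1 \<le> j"
  shows "j + d * l + 1 \<le> L \<Longrightarrow> f (ord (j + d*l)) = f (ord j) \<or> prec (c (fst (lab q))) (f (ord (j + d*l))) (f (ord j))"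
proof (induction d)
  case 0 then show ?case by simp
next
  case (Suc d)
  have rj: "res (j + d*l) = q" using res_add[of j d] j by simp
  have st: "prec (c (fst (lab q))) (f (ord (j + d*l + l))) (f (ord (j + d*l + l + 1))) \<and>
         prec (c (fst (lab q))) (f (ord (j + d*l + l + 1))) (f (ord (j + d*l)))"
    using stepA[OF q pq rj] j Suc.prems by auto
  have e: "j + Suc d * l = j + d*l + l" by simp
  have "prec (c (fst (lab q))) (f (ord (j + d*l + l))) (f (ord (j + d*l)))"
    using st prec_trans by blast
  then have "prec (c (fst (lab q))) (f (ord (j + Suc d*l))) (f (ord (j + d*l)))"
    unfolding e .
  moreover have "f (ord (j + d*l)) = f (ord j) \<or> prec (c (fst (lab q))) (f (ord (j + d*l))) (f (ord j))"
    using Suc by simp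
  ultimately show ?case using prec_trans by auto
qed

lemma stepB:
  assumes q: "q \<in> {1..l}" and p: "p \<in> {1..l}" "nx p = q"
    and pq: "fst (lab p) = fst (lab q)" "snd (lab p) \<noteq> snd (lab q)"
    and t: "res t = q" "l + 2 \<le> t" "t \<le> L"
  shows "prec (c (fst (lab q))) (f (ord t)) (f (ord (t-l-1))) \<and>
         prec (c (fst (lab q))) (f (ord (t-l-1))) (f (ord (t-l)))"
proof -
  have r1: "res (t-l) = q" using res_add[of "t-l" 1] t by simp
  have "res (Suc (t-l-1)) = nx (res (t-l-1))" using res_suc[of "t-l-1"] t by simp
  moreover have "Suc (t-l-1) = t-l" using t by simp
  ultimately have "nx (res (t-l-1)) = nx p" using r1 p by simp
  then have r2: "res (t-l-1) = p" using nx_inj[OF res_range p(1)] by simp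
  have a1: "A (ord t) (ord (t-l-1))" using c3[rule_format, of t] t by auto
  have "1 < t - l" "t - l \<le> L" using t by auto
  then have a2: "A (ord (t-l-1)) (ord (t-l))" using c2 by auto
  have tl1: "t-l-1 \<in> {1..L}" "t \<in> {1..L}" "t - l \<in> {1..L}" using t by auto
  have p1: "prec (c (cl t)) (f (ord t)) (f (ord (t-l-1)))"
    using arr_col[OF tl1(2,1)] a1 t pq unfolding cl_def rw_def r2 by auto
  have p2: "prec (c (cl (t-l-1))) (f (ord (t-l-1))) (f (ord (t-l)))"
    using arr_col[OF tl1(1,3)] a2 t pq unfolding cl_def rw_def r1 r2 by auto
  show ?thesis using p1 p2 unfolding cl_def r2 t(1) pq by simp
qed

lemma chainB:
  assumes q: "q \<in> {1..l}" and p: "p \<in> {1..l}" "nx p = q"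
    and pq: "fst (lab p) = fst (lab q)" "snd (lab p) \<noteq> snd (lab q)"
    and s: "res s = q" "2 \<le> s"
  shows "s + d * l \<le> L \<Longrightarrow> f (ord (s + d*l)) = f (ord s) \<or> prec (c (fst (lab q))) (f (ord (s + d*l))) (f (ord s))"
proof (induction d)
  case 0 then show ?case by simp
next
  case (Suc d)
  have rj: "res (s + Suc d*l) = q" using res_add[of s "Suc d"] s by simp
  have st: "prec (c (fst (lab q))) (f (ord (s + Suc d*l))) (f (ord (s + Suc d*l-l-1))) \<and>
         prec (c (fst (lab q))) (f (ord (s + Suc d*l-l-1))) (f (ord (s + Suc d*l-l)))"
    using stepB[OF q p pq rj] s Suc.prems by auto
  moreover have "s + Suc d*l-l = s + d * l" by simp
  ultimately have "prec (c (fst (lab q))) (f (ord (s + Suc d*l))) (f (ord (s + d*l)))"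
    using prec_trans by metis
  moreover have "f (ord (s + d*l)) = f (ord s) \<or> prec (c (fst (lab q))) (f (ord (s + d*l))) (f (ord s))"
    using Suc by simp
  ultimately show ?case using prec_trans by auto
qed

lemma res_pred:
  assumes "2 \<le> j" "p \<in> {1..l}" "nx p = res j" shows "res (j - 1) = p"
proof -
  have "res (Suc (j-1)) = nx (res (j-1))" using res_suc[of "j-1"] assms by simp
  then have "nx (res (j-1)) = nx p" using assms by (simp add: Suc_diff_le)
  then show ?thesis using nx_inj[OF res_range assms(2)] by simp
qed

context
  fixes C X :: "nat set"
  assumes CX: "C \<subseteq> X" "X \<subseteq> {1..L}"
    and conv: "\<forall>x\<in>X. \<forall>y\<in>X. \<forall>z\<in>{1..L}. f x < f z \<and> f z < f y \<longrightarrow> z \<in> X"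
    and mon: "(\<forall>x\<in>C. \<forall>y\<in>C. f x < f y \<longrightarrow> g x < g y) \<or> (\<forall>x\<in>C. \<forall>y\<in>C. f x < f y \<longrightarrow> g y < g x)"
begin

lemma witness:
  assumes st: "s \<in> {1..L}" "t \<in> {1..L}" "k \<in> {1..L}" "ord s \<in> C" "ord t \<in> C" "rw s = rw t" "rw k \<noteq> rw t"
    and btw: "(f (ord s) < f (ord k) \<and> f (ord k) < f (ord t)) \<or> (f (ord t) < f (ord k) \<and> f (ord k) < f (ord s))"
  shows "ord k \<in> X - C"
proof -
  have k1: "ord k \<in> {1..L}" using ordb st(3) by (metis bij_betw_apply)
  have "ord k \<in> X"
  proof (cases "f (ord s) < f (ord k)")
    case True
    then show ?thesis using conv btw st CX k1 by blast
  next
    case False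
    then show ?thesis using conv btw st CX k1 by blast
  qed
  moreover have G: "(g (ord k) < g (ord s) \<and> g (ord k) < g (ord t)) \<or> (g (ord s) < g (ord k) \<and> g (ord t) < g (ord k))"
  proof (cases "rw k < rw t")
    case True
    then show ?thesis using col_order[OF hm, of "rw k" "rw t"] cell_j[OF st(1)] cell_j[OF st(2)] cell_j[OF st(3)] st(6)
      by metis
  next
    case False
    then have "rw t < rw k" using st(7) by simp
    then show ?thesis using col_order[OF hm, of "rw t" "rw k"] cell_j[OF st(1)] cell_j[OF st(2)] cell_j[OF st(3)] st(6)
      by metis
  qed
  moreover have "ord k \<notin> C"
  proof
    assume kC: "ord k \<in> C"
    from mon show False
    proof
      assume inc: "\<forall>x\<in>C. \<forall>y\<in>C. f x < f y \<longrightarrow> g x < g y"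
      have "f (ord s) < f (ord k) \<longrightarrow> g (ord s) < g (ord k)" "f (ord k) < f (ord t) \<longrightarrow> g (ord k) < g (ord t)"
        "f (ord t) < f (ord k) \<longrightarrow> g (ord t) < g (ord k)" "f (ord k) < f (ord s) \<longrightarrow> g (ord k) < g (ord s)"
        using inc kC st(4,5) by auto
      then show False using G btw by linarith
    next
      assume dec: "\<forall>x\<in>C. \<forall>y\<in>C. f x < f y \<longrightarrow> g y < g x"
      have "f (ord s) < f (ord k) \<longrightarrow> g (ord k) < g (ord s)" "f (ord k) < f (ord t) \<longrightarrow> g (ord t) < g (ord k)"
        "f (ord t) < f (ord k) \<longrightarrow> g (ord k) < g (ord t)" "f (ord k) < f (ord s) \<longrightarrow> g (ord s) < g (ord k)"
        using dec kC st(4,5) by auto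
      then show False using G btw by linarith
    qed
  qed
  ultimately show ?thesis by simp
qed

lemma count_gap:
  assumes E: "E \<subseteq> {1..L}" and inj: "inj_on wi (E - {Min E})"
    and w: "\<forall>t\<in>E - {Min E}. wi t \<in> {1..L} \<and> ord (wi t) \<in> X - C"
  shows "card E \<le> card (X - C) + 1"
proof (cases "E = {}")
  case True then show ?thesis by simp
next
  case False
  have fE: "finite E" using E finite_subset by blast
  have "card E > 0" using False fE by auto
  then have "card E = card (E - {Min E}) + 1"
    using False fE Min_in[OF fE False] by (simp add: card_Diff_singleton)
  moreover have "card (E - {Min E}) \<le> card (X - C)"
  proof (rule card_inj_on_le[of "ord \<circ> wi"])
    have "wi ` (E - {Min E}) \<subseteq> {1..L}" using w by auto
    then have "inj_on ord (wi ` (E - {Min E}))"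
      using bij_betw_imp_inj_on[OF ordb] inj_on_subset by blast
    then show "inj_on (ord \<circ> wi) (E - {Min E})" using inj by (simp add: comp_inj_on)
    show "(ord \<circ> wi) ` (E - {Min E}) \<subseteq> X - C" using w by auto
    show "finite (X - C)" using CX finite_subset by blast
  qed
  ultimately show ?thesis by simp
qed

lemma card_Iq:
  assumes q: "q \<in> {1..l}"
  shows "card {j\<in>{1..L}. res j = q \<and> ord j \<in> C} \<le> card (X - C) + 2"
proof -
  define I where "I = {j\<in>{1..L}. res j = q \<and> ord j \<in> C}"
  obtain p where p: "p \<in> {1..l}" "p = nx q \<or> nx p = q" "fst (lab p) = fst (lab q)" "snd (lab p) \<noteq> snd (lab q)"
    using partner[OF q] by blast
  have fI: "finite I" unfolding I_def by simp
  have gen: "\<exists>d\<ge>1. t = Min E + d * l \<and> Min E \<in> I" if "E \<subseteq> I" "t \<in> E - {Min E}" for E t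
  proof -
    have fE: "finite E" using that fI finite_subset by blast
    have ne: "E \<noteq> {}" using that by auto
    have sE: "Min E \<in> E" using Min_in[OF fE ne] .
    have "Min E < t" using that Min_le[OF fE] by (metis DiffD1 DiffD2 le_neq_implies_less singletonI)
    moreover have "res (Min E) = res t" "1 \<le> Min E" using sE that unfolding I_def by auto
    ultimately show ?thesis using res_eq_diff sE that by blast
  qed
  from p(2) show ?thesis
  proof
    assume pA: "p = nx q"
    define E where "E = I - {L}"
    have EI: "E \<subseteq> I" unfolding E_def by auto
    have "card E \<le> card (X - C) + 1"
    proof (rule count_gap[of E "\<lambda>t. t + 1"])
      show "E \<subseteq> {1..L}" unfolding E_def I_def by auto
      show "inj_on (\<lambda>t. t + 1) (E - {Min E})" by (simp add: inj_on_def)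
      show "\<forall>t\<in>E - {Min E}. t + 1 \<in> {1..L} \<and> ord (t + 1) \<in> X - C"
      proof
        fix t assume t: "t \<in> E - {Min E}"
        obtain d where d: "d \<ge> 1" "t = Min E + d * l" "Min E \<in> I" using gen[OF EI t] by blast
        define s where "s = Min E"
        have s: "s \<in> {1..L}" "res s = q" "ord s \<in> C" using d(3) unfolding s_def I_def by auto
        have tt: "t \<in> {1..L}" "res t = q" "ord t \<in> C" "t \<noteq> L" using t unfolding E_def I_def by auto
        define t' where "t' = s + (d - 1) * l"
        have tt': "t = t' + l" unfolding t'_def s_def using d by (cases d) auto
        have rt': "res t' = q" using res_add[of s "d-1"] s unfolding t'_def by simp
        have sa: "prec (c (fst (lab q))) (f (ord t)) (f (ord (t+1))) \<and> prec (c (fst (lab q))) (f (ord (t+1))) (f (ord t'))"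
          using stepA[OF q p(3)[unfolded pA] p(4)[unfolded pA] rt'] s tt unfolding tt' t'_def by auto
        have ca: "f (ord t') = f (ord s) \<or> prec (c (fst (lab q))) (f (ord t')) (f (ord s))"
          using chainA[OF q p(3)[unfolded pA] p(4)[unfolded pA] s(2), of "d-1"] s tt unfolding tt' t'_def by auto
        have btw: "(f (ord s) < f (ord (t+1)) \<and> f (ord (t+1)) < f (ord t)) \<or> (f (ord t) < f (ord (t+1)) \<and> f (ord (t+1)) < f (ord s))"
          using sa ca unfolding prec_def by (auto split: if_splits)
        have k: "t + 1 \<in> {1..L}" using tt by auto
        have "res (t+1) = nx q" using res_suc[of t] tt by simp
        then have "rw (t+1) \<noteq> rw t" "rw s = rw t" using p(4) pA s tt unfolding rw_def by auto
        then show "t + 1 \<in> {1..L} \<and> ord (t + 1) \<in> X - C"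
          using witness[OF s(1) tt(1) k s(3) tt(3) _ _ btw] k by auto
      qed
    qed
    moreover have "card I \<le> card E + 1"
    proof -
      have "card I \<le> card (insert L E)" using fI unfolding E_def by (intro card_mono) auto
      also have "\<dots> \<le> card E + 1" using fI unfolding E_def by (simp add: card_insert_if; arith)
      finally show ?thesis .
    qed
    ultimately show ?thesis unfolding I_def by simp
  next
    assume pB: "nx p = q"
    define E where "E = I - {1}"
    have EI: "E \<subseteq> I" unfolding E_def by auto
    have big: "l + 2 \<le> t" if tE: "t \<in> E - {Min E}" for t
    proof -
      obtain d where d: "d \<ge> 1" "t = Min E + d * l" "Min E \<in> I" using gen[OF EI tE] by blast
      have "Min E \<in> E" using tE Min_in[of E] fI EI finite_subset by blast
      then have "2 \<le> Min E" unfolding E_def I_def by auto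
      moreover have "l \<le> d * l" using d by simp
      ultimately show ?thesis using d by linarith
    qed
    have "card E \<le> card (X - C) + 1"
    proof (rule count_gap[of E "\<lambda>t. t - l - 1"])
      show "E \<subseteq> {1..L}" unfolding E_def I_def by auto
      show "inj_on (\<lambda>t. t - l - 1) (E - {Min E})"
        by (rule inj_onI) (use big in fastforce)
      show "\<forall>t\<in>E - {Min E}. t - l - 1 \<in> {1..L} \<and> ord (t - l - 1) \<in> X - C"
      proof
        fix t assume t: "t \<in> E - {Min E}"
        obtain d where d: "d \<ge> 1" "t = Min E + d * l" "Min E \<in> I" using gen[OF EI t] by blast
        define s where "s = Min E"
        have sE: "Min E \<in> E" using t Min_in[of E] fI EI finite_subset by blast
        have s: "s \<in> {1..L}" "res s = q" "ord s \<in> C" "2 \<le> s" using sE unfolding s_def I_def E_def by auto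
        have tt: "t \<in> {1..L}" "res t = q" "ord t \<in> C" "l + 2 \<le> t" using t big unfolding E_def I_def by auto
        have tl: "t - l = s + (d - 1) * l" unfolding s_def using d by (cases d) auto
        have sb: "prec (c (fst (lab q))) (f (ord t)) (f (ord (t-l-1))) \<and> prec (c (fst (lab q))) (f (ord (t-l-1))) (f (ord (t-l)))"
          using stepB[OF q p(1) pB p(3) p(4) tt(2) tt(4)] tt by auto
        have cb: "f (ord (t-l)) = f (ord s) \<or> prec (c (fst (lab q))) (f (ord (t-l))) (f (ord s))"
          using chainB[OF q p(1) pB p(3) p(4) s(2) s(4), of "d-1"] tt unfolding tl[symmetric] by auto
        have btw: "(f (ord s) < f (ord (t-l-1)) \<and> f (ord (t-l-1)) < f (ord t)) \<or> (f (ord t) < f (ord (t-l-1)) \<and> f (ord (t-l-1)) < f (ord s))"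
          using sb cb unfolding prec_def by (auto split: if_splits)
        have k: "t - l - 1 \<in> {1..L}" using tt by auto
        have "res (t - l) = q" using res_add[of "t-l" 1] tt by simp
        then have "res (t - l - 1) = p" using res_pred[of "t-l" p] p(1) pB tt by simp
        then have "rw (t-l-1) \<noteq> rw t" "rw s = rw t" using p(4) s tt unfolding rw_def by auto
        then show "t - l - 1 \<in> {1..L} \<and> ord (t - l - 1) \<in> X - C"
          using witness[OF s(1) tt(1) k s(3) tt(3) _ _ btw] k by auto
      qed
    qed
    moreover have "card I \<le> card E + 1"
    proof -
      have "card I \<le> card (insert 1 E)" using fI unfolding E_def by (intro card_mono) auto
      also have "\<dots> \<le> card E + 1" using fI unfolding E_def by (simp add: card_insert_if; arith)
      finally show ?thesis .
    qed
    ultimately show ?thesis unfolding I_def by simp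
  qed
qed

theorem core: "card C \<le> 2 * l * (card (X - C) + 1)"
proof -
  define I where "I q = {j\<in>{1..L}. res j = q \<and> ord j \<in> C}" for q
  have sub: "C \<subseteq> (\<Union>q\<in>{1..l}. ord ` I q)"
  proof
    fix x assume x: "x \<in> C"
    then have "x \<in> {1..L}" using CX by auto
    then obtain j where j: "j \<in> {1..L}" "x = ord j" using ordb by (metis bij_betw_imp_surj_on imageE)
    then show "x \<in> (\<Union>q\<in>{1..l}. ord ` I q)" using res_range[of j] x unfolding I_def by blast
  qed
  have "card C \<le> card (\<Union>q\<in>{1..l}. ord ` I q)"
    by (rule card_mono[OF _ sub]) (simp add: I_def)
  also have "\<dots> \<le> (\<Sum>q\<in>{1..l}. card (ord ` I q))" by (rule card_UN_le) simp
  also have "\<dots> \<le> (\<Sum>q\<in>{1..l}. card (X - C) + 2)"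
  proof (rule sum_mono)
    fix q assume q: "q \<in> {1..l}"
    have "finite (I q)" by (simp add: I_def)
    then have "card (ord ` I q) \<le> card (I q)" by (rule card_image_le)
    also have "\<dots> \<le> card (X - C) + 2" using card_Iq[OF q] unfolding I_def .
    finally show "card (ord ` I q) \<le> card (X - C) + 2" .
  qed
  also have "\<dots> = l * (card (X - C) + 2)" by simp
  also have "\<dots> \<le> 2 * l * (card (X - C) + 1)" by simp
  finally show ?thesis .
qed

end

end


lemma in_row_col: "in_row h \<pi> j x = in_col h j (\<pi> x)"
  by (simp add: in_row_def in_col_def)

lemma orient_arr: "orient_arrow m n c r L \<pi> v h x y \<Longrightarrow> arr m n v h id \<pi> c r x y"
  unfolding orient_arrow_def arr_def in_row_col by auto

lemma arr_swap: "arr m n v h id \<pi> c r x y \<Longrightarrow> arr n m h v \<pi> id r c x y"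
  unfolding arr_def by auto

lemma orient_arr_swap: "orient_arrow m n c r L \<pi> v h x y \<Longrightarrow> arr n m h v \<pi> id r c x y"
  by (rule arr_swap[OF orient_arr])

lemma grid_mono: "grid_lines k L v \<Longrightarrow> \<forall>i<k. v i \<le> v (Suc i)"
  unfolding grid_lines_def by auto

lemma cyc_cell:
  assumes "GM_cycle m n M l u" "x \<in> cycle_cells l u"
  shows "\<exists>k<l. x = edge_cell (u k) (u (Suc k mod l)) \<and> fst x \<in> {1..m} \<and> snd x \<in> {1..n} \<and>
     ((u k = Inl (fst x) \<and> u (Suc k mod l) = Inr (snd x)) \<or> (u k = Inr (snd x) \<and> u (Suc k mod l) = Inl (fst x)))"
proof -
  obtain k where k: "k < l" "x = edge_cell (u k) (u (Suc k mod l))" using assms(2) unfolding cycle_cells_def by auto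
  have "GM_edge m n M (u k) (u (Suc k mod l))" using assms(1) k unfolding GM_cycle_def by auto
  then show ?thesis using k unfolding GM_edge_def by (intro exI[of _ k]) auto
qed

lemma suc_mod_eq:
  assumes "l > 0" "k < l" "k' < l" "Suc k mod l = Suc k' mod l" shows "k = k'"
  using assms by (cases "Suc k = l"; cases "Suc k' = l") auto

lemma cyc_no3_row:
  assumes cyc: "GM_cycle m n M l u" and xs: "a \<in> cycle_cells l u" "b \<in> cycle_cells l u" "d \<in> cycle_cells l u"
    and ne: "a \<noteq> b" "a \<noteq> d" "b \<noteq> d" and eq: "snd a = snd b" "snd a = snd d"
  shows False
proof -
  have l0: "l > 0" and inj: "inj_on u {..<l}" using cyc unfolding GM_cycle_def by auto
  obtain ka where ka: "ka<l" "a = edge_cell (u ka) (u (Suc ka mod l))"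
     "(u ka = Inl (fst a) \<and> u (Suc ka mod l) = Inr (snd a)) \<or> (u ka = Inr (snd a) \<and> u (Suc ka mod l) = Inl (fst a))"
    using cyc_cell[OF cyc xs(1)] by blast
  have "\<exists>p<l. u p = Inr (snd a)"
  proof (cases "u ka = Inr (snd a)")
    case True then show ?thesis using ka(1) by blast
  next
    case False then have "u (Suc ka mod l) = Inr (snd a)" using ka(3) by auto
    then show ?thesis using l0 by (intro exI[of _ "Suc ka mod l"]) auto
  qed
  then obtain p where p: "p < l" "u p = Inr (snd a)" by blast
  have mem: "x = edge_cell (u p) (u (Suc p mod l)) \<or> (\<exists>k<l. Suc k mod l = p \<and> x = edge_cell (u k) (u (Suc k mod l)))"
    if xc: "x \<in> cycle_cells l u" "snd x = snd a" for x
  proof -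
    obtain k where k: "k<l" "x = edge_cell (u k) (u (Suc k mod l))"
       "(u k = Inl (fst x) \<and> u (Suc k mod l) = Inr (snd x)) \<or> (u k = Inr (snd x) \<and> u (Suc k mod l) = Inl (fst x))"
      using cyc_cell[OF cyc xc(1)] by blast
    have sk: "Suc k mod l < l" using l0 by simp
    show ?thesis
    proof (cases "u k = Inr (snd a)")
      case True
      then have "k = p" using inj_onD[OF inj, of k p] k(1) p by simp
      then show ?thesis using k by simp
    next
      case False
      then have "u (Suc k mod l) = Inr (snd a)" using k(3) xc(2) by auto
      then have "Suc k mod l = p" using inj_onD[OF inj, of "Suc k mod l" p] sk p by simp
      then show ?thesis using k by blast
    qed
  qed
  have uniq: "x = y" if "\<exists>k<l. Suc k mod l = p \<and> x = edge_cell (u k) (u (Suc k mod l))"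
      "\<exists>k<l. Suc k mod l = p \<and> y = edge_cell (u k) (u (Suc k mod l))" for x y
    using that suc_mod_eq[OF l0] by blast
  show False using mem[OF xs(1)] mem[OF xs(2)] mem[OF xs(3)] eq ne uniq[of a b] uniq[of a d] uniq[of b d] by auto
qed

lemma cyc_no3_col:
  assumes cyc: "GM_cycle m n M l u" and xs: "a \<in> cycle_cells l u" "b \<in> cycle_cells l u" "d \<in> cycle_cells l u"
    and ne: "a \<noteq> b" "a \<noteq> d" "b \<noteq> d" and eq: "fst a = fst b" "fst a = fst d"
  shows False
proof -
  have l0: "l > 0" and inj: "inj_on u {..<l}" using cyc unfolding GM_cycle_def by auto
  obtain ka where ka: "ka<l" "a = edge_cell (u ka) (u (Suc ka mod l))"
     "(u ka = Inl (fst a) \<and> u (Suc ka mod l) = Inr (snd a)) \<or> (u ka = Inr (snd a) \<and> u (Suc ka mod l) = Inl (fst a))"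
    using cyc_cell[OF cyc xs(1)] by blast
  have "\<exists>p<l. u p = Inl (fst a)"
  proof (cases "u ka = Inl (fst a)")
    case True then show ?thesis using ka(1) by blast
  next
    case False then have "u (Suc ka mod l) = Inl (fst a)" using ka(3) by auto
    then show ?thesis using l0 by (intro exI[of _ "Suc ka mod l"]) auto
  qed
  then obtain p where p: "p < l" "u p = Inl (fst a)" by blast
  have mem: "x = edge_cell (u p) (u (Suc p mod l)) \<or> (\<exists>k<l. Suc k mod l = p \<and> x = edge_cell (u k) (u (Suc k mod l)))"
    if xc: "x \<in> cycle_cells l u" "fst x = fst a" for x
  proof -
    obtain k where k: "k<l" "x = edge_cell (u k) (u (Suc k mod l))"
       "(u k = Inl (fst x) \<and> u (Suc k mod l) = Inr (snd x)) \<or> (u k = Inr (snd x) \<and> u (Suc k mod l) = Inl (fst x))"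
      using cyc_cell[OF cyc xc(1)] by blast
    have sk: "Suc k mod l < l" using l0 by simp
    show ?thesis
    proof (cases "u k = Inl (fst a)")
      case True
      then have "k = p" using inj_onD[OF inj, of k p] k(1) p by simp
      then show ?thesis using k by simp
    next
      case False
      then have "u (Suc k mod l) = Inl (fst a)" using k(3) xc(2) by auto
      then have "Suc k mod l = p" using inj_onD[OF inj, of "Suc k mod l" p] sk p by simp
      then show ?thesis using k by blast
    qed
  qed
  have uniq: "x = y" if "\<exists>k<l. Suc k mod l = p \<and> x = edge_cell (u k) (u (Suc k mod l))"
      "\<exists>k<l. Suc k mod l = p \<and> y = edge_cell (u k) (u (Suc k mod l))" for x y
    using that suc_mod_eq[OF l0] by blast
  show False using mem[OF xs(1)] mem[OF xs(2)] mem[OF xs(3)] eq ne uniq[of a b] uniq[of a d] uniq[of b d] by auto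
qed


lemma inst_col:
  assumes co: "gridded_coil m n M c r L \<pi> v h l u ord lab"
  shows "coilcore L l m n ord lab v h id \<pi> c r"
proof -
  have cyc: "GM_cycle m n M l u" and gr: "M_gridding m n M L \<pi> v h"
    and lb: "bij_betw lab {1..l} (cycle_cells l u)" using co unfolding gridded_coil_def by auto
  have labr: "lab ` {1..l} \<subseteq> {1..m} \<times> {1..n}"
    using lb cyc_cell[OF cyc] unfolding bij_betw_def by (fastforce simp: mem_Times_iff)
  show ?thesis
  proof (unfold_locales)
    show "3 \<le> l" using cyc unfolding GM_cycle_def by simp
    show "l < L" "bij_betw ord {1..L} {1..L}" using co unfolding gridded_coil_def by auto
    show "inj_on lab {1..l}" using lb by (rule bij_betw_imp_inj_on)
    show "lab ` {1..l} \<subseteq> {1..m} \<times> {1..n}" by (rule labr)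
    show "\<forall>i<m. v i \<le> v (Suc i)" "\<forall>j<n. h j \<le> h (Suc j)" using gr grid_mono unfolding M_gridding_def by auto
    show "\<forall>j\<in>{1..L}. in_col v (fst (lab ((j - 1) mod l + 1))) (id (ord j)) \<and>
         in_col h (snd (lab ((j - 1) mod l + 1))) (\<pi> (ord j))"
      using co unfolding gridded_coil_def in_cell_def in_row_col by auto
    show "\<forall>i. 1 < i \<and> i \<le> L \<longrightarrow> arr m n v h id \<pi> c r (ord (i - 1)) (ord i)"
      using co orient_arr unfolding gridded_coil_def by blast
    show "\<forall>i. l + 1 < i \<and> i \<le> L \<longrightarrow> arr m n v h id \<pi> c r (ord i) (ord (i - l - 1))"
      using co orient_arr unfolding gridded_coil_def by blast
    show "\<forall>q1\<in>{1..l}. \<forall>q2\<in>{1..l}. \<forall>q3\<in>{1..l}. q1 \<noteq> q2 \<and> q1 \<noteq> q3 \<and> q2 \<noteq> q3 \<longrightarrow>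
       \<not> (snd (lab q1) = snd (lab q2) \<and> snd (lab q1) = snd (lab q3))"
    proof (intro ballI impI notI)
      fix q1 q2 q3 assume q: "q1 \<in> {1..l}" "q2 \<in> {1..l}" "q3 \<in> {1..l}" "q1 \<noteq> q2 \<and> q1 \<noteq> q3 \<and> q2 \<noteq> q3"
        "snd (lab q1) = snd (lab q2) \<and> snd (lab q1) = snd (lab q3)"
      have "lab q1 \<noteq> lab q2" "lab q1 \<noteq> lab q3" "lab q2 \<noteq> lab q3"
        using q bij_betw_imp_inj_on[OF lb] by (metis inj_onD)+
      moreover have "lab q1 \<in> cycle_cells l u" "lab q2 \<in> cycle_cells l u" "lab q3 \<in> cycle_cells l u"
        using q lb bij_betw_apply by metis+
      ultimately show False using cyc_no3_row[OF cyc] q(5) by metis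
    qed
  qed
qed

lemma inst_row:
  assumes co: "gridded_coil m n M c r L \<pi> v h l u ord lab"
  shows "coilcore L l n m ord (prod.swap \<circ> lab) h v \<pi> id r c"
proof -
  have cyc: "GM_cycle m n M l u" and gr: "M_gridding m n M L \<pi> v h"
    and lb: "bij_betw lab {1..l} (cycle_cells l u)" using co unfolding gridded_coil_def by auto
  have labr: "lab ` {1..l} \<subseteq> {1..m} \<times> {1..n}"
    using lb cyc_cell[OF cyc] unfolding bij_betw_def by (fastforce simp: mem_Times_iff)
  show ?thesis
  proof (unfold_locales)
    show "3 \<le> l" using cyc unfolding GM_cycle_def by simp
    show "l < L" "bij_betw ord {1..L} {1..L}" using co unfolding gridded_coil_def by auto
    show "inj_on (prod.swap \<circ> lab) {1..l}" using bij_betw_imp_inj_on[OF lb]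
      by (simp add: comp_inj_on)
    show "(prod.swap \<circ> lab) ` {1..l} \<subseteq> {1..n} \<times> {1..m}" using labr by (auto simp: mem_Times_iff)
    show "\<forall>i<n. h i \<le> h (Suc i)" "\<forall>j<m. v j \<le> v (Suc j)" using gr grid_mono unfolding M_gridding_def by auto
    show "\<forall>j\<in>{1..L}. in_col h (fst ((prod.swap \<circ> lab) ((j - 1) mod l + 1))) (\<pi> (ord j)) \<and>
         in_col v (snd ((prod.swap \<circ> lab) ((j - 1) mod l + 1))) (id (ord j))"
      using co unfolding gridded_coil_def in_cell_def in_row_col by auto
    show "\<forall>i. 1 < i \<and> i \<le> L \<longrightarrow> arr n m h v \<pi> id r c (ord (i - 1)) (ord i)"
      using co orient_arr_swap unfolding gridded_coil_def by blast
    show "\<forall>i. l + 1 < i \<and> i \<le> L \<longrightarrow> arr n m h v \<pi> id r c (ord i) (ord (i - l - 1))"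
      using co orient_arr_swap unfolding gridded_coil_def by blast
    show "\<forall>q1\<in>{1..l}. \<forall>q2\<in>{1..l}. \<forall>q3\<in>{1..l}. q1 \<noteq> q2 \<and> q1 \<noteq> q3 \<and> q2 \<noteq> q3 \<longrightarrow>
       \<not> (snd ((prod.swap \<circ> lab) q1) = snd ((prod.swap \<circ> lab) q2) \<and> snd ((prod.swap \<circ> lab) q1) = snd ((prod.swap \<circ> lab) q3))"
    proof (intro ballI impI notI)
      fix q1 q2 q3 assume q: "q1 \<in> {1..l}" "q2 \<in> {1..l}" "q3 \<in> {1..l}" "q1 \<noteq> q2 \<and> q1 \<noteq> q3 \<and> q2 \<noteq> q3"
        "snd ((prod.swap \<circ> lab) q1) = snd ((prod.swap \<circ> lab) q2) \<and> snd ((prod.swap \<circ> lab) q1) = snd ((prod.swap \<circ> lab) q3)"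
      have "lab q1 \<noteq> lab q2" "lab q1 \<noteq> lab q3" "lab q2 \<noteq> lab q3"
        using q bij_betw_imp_inj_on[OF lb] by (metis inj_onD)+
      moreover have "lab q1 \<in> cycle_cells l u" "lab q2 \<in> cycle_cells l u" "lab q3 \<in> cycle_cells l u"
        using q lb bij_betw_apply by metis+
      moreover have "fst (lab q1) = fst (lab q2)" "fst (lab q1) = fst (lab q3)" using q(5) by auto
      ultimately show False using cyc_no3_col[OF cyc] by metis
    qed
  qed
qed


theorem proposition5p5:
  fixes m n L l :: nat and M :: "nat \<Rightarrow> nat \<Rightarrow> int" and c r :: "nat \<Rightarrow> int"
    and \<pi> v h v' h' ord :: "nat \<Rightarrow> nat" and u :: "nat \<Rightarrow> nat + nat" and lab :: "nat \<Rightarrow> nat \<times> nat"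
  assumes "gridding_matrix m n M"
    and "partial_mult m n M c r"
    and "\<exists>l0 u0. GM_cycle m n M l0 u0"
    and "gridded_coil m n M c r L \<pi> v h l u ord lab"
    and "M_gridding m n M L \<pi> v' h'"
  shows "(\<forall>i\<in>{1..m}. \<forall>j\<in>{1..n}. card (cell_pts L v' h' \<pi> i j) > 0 \<longrightarrow>
            card (cell_pts L v' h' \<pi> i j)
              \<le> 2 * l * ((\<Sum>j'\<in>{1..n} - {j}. card (cell_pts L v' h' \<pi> i j')) + 1))
       \<and> (\<forall>j\<in>{1..n}. \<forall>i\<in>{1..m}. card (cell_pts L v' h' \<pi> i j) > 0 \<longrightarrow>
            card (cell_pts L v' h' \<pi> i j)
              \<le> 2 * l * ((\<Sum>i'\<in>{1..m} - {i}. card (cell_pts L v' h' \<pi> i' j)) + 1))"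
proof -
  note gm = assms(1) and co = assms(4) and g2 = assms(5)
  define P where "P i j = cell_pts L v' h' \<pi> i j" for i j
  have perm: "\<forall>x\<in>{1..L}. \<pi> x \<in> {1..L}" using co unfolding gridded_coil_def is_perm_def
    by (metis bij_betw_apply)
  have gv: "grid_lines m L v'" and gh: "grid_lines n L h'" using g2 unfolding M_gridding_def by auto
  have vm: "\<forall>i<m. v' i \<le> v' (Suc i)" and hm: "\<forall>j<n. h' j \<le> h' (Suc j)"
    using grid_mono[OF gv] grid_mono[OF gh] by auto
  have Pdef: "P i j = {x\<in>{1..L}. in_col v' i x \<and> in_col h' j (\<pi> x)}" for i j
    unfolding P_def cell_pts_def in_cell_def in_row_col by simp
  have mon: "(\<forall>x\<in>P i j. \<forall>y\<in>P i j. x < y \<longrightarrow> \<pi> x < \<pi> y) \<or> (\<forall>x\<in>P i j. \<forall>y\<in>P i j. x < y \<longrightarrow> \<pi> y < \<pi> x)"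
    if ij: "i \<in> {1..m}" "j \<in> {1..n}" "P i j \<noteq> {}" for i j
  proof -
    have "M i j \<in> {-1, 0, 1}" using gm ij unfolding gridding_matrix_def by auto
    moreover have "M i j \<noteq> 0" using g2 ij unfolding M_gridding_def P_def by auto
    ultimately have "M i j = 1 \<or> M i j = -1" by auto
    then show ?thesis using g2 ij unfolding M_gridding_def P_def by auto
  qed
  have fin: "finite (P i j)" for i j unfolding Pdef by simp
  show ?thesis
  proof (intro conjI ballI impI)
    fix i j assume i: "i \<in> {1..m}" and j: "j \<in> {1..n}" and pos: "card (cell_pts L v' h' \<pi> i j) > 0"
    have ne: "P i j \<noteq> {}" using pos unfolding P_def by auto
    define X where "X = {x\<in>{1..L}. in_col v' i x}"
    have XC: "X - P i j = (\<Union>j'\<in>{1..n} - {j}. P i j')"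
    proof
      show "X - P i j \<subseteq> (\<Union>j'\<in>{1..n} - {j}. P i j')"
      proof
        fix x assume x: "x \<in> X - P i j"
        then have "\<pi> x \<in> {1..L}" using perm unfolding X_def by auto
        then obtain j' where "j' \<in> {1..n}" "in_col h' j' (\<pi> x)" using col_exists[OF gh] by blast
        then show "x \<in> (\<Union>j'\<in>{1..n} - {j}. P i j')" using x unfolding X_def Pdef by auto
      qed
      show "(\<Union>j'\<in>{1..n} - {j}. P i j') \<subseteq> X - P i j"
        using col_unique[OF hm] j unfolding X_def Pdef by blast
    qed
    have "card (X - P i j) = (\<Sum>j'\<in>{1..n} - {j}. card (P i j'))"
      unfolding XC
    proof (rule card_UN_disjoint)
      show "\<forall>a\<in>{1..n} - {j}. \<forall>b\<in>{1..n} - {j}. a \<noteq> b \<longrightarrow> P i a \<inter> P i b = {}"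
        using col_unique[OF hm] unfolding Pdef by blast
    qed (auto simp: fin)
    moreover have "card (P i j) \<le> 2 * l * (card (X - P i j) + 1)"
    proof (rule coilcore.core[OF inst_col[OF co]])
      show "P i j \<subseteq> X" "X \<subseteq> {1..L}" unfolding X_def Pdef by auto
      show "\<forall>x\<in>X. \<forall>y\<in>X. \<forall>z\<in>{1..L}. id x < id z \<and> id z < id y \<longrightarrow> z \<in> X"
        unfolding X_def in_col_def by auto
      show "(\<forall>x\<in>P i j. \<forall>y\<in>P i j. id x < id y \<longrightarrow> \<pi> x < \<pi> y) \<or> (\<forall>x\<in>P i j. \<forall>y\<in>P i j. id x < id y \<longrightarrow> \<pi> y < \<pi> x)"
        using mon[OF i j ne] by simp
    qed
    ultimately show "card (cell_pts L v' h' \<pi> i j) \<le> 2 * l * ((\<Sum>j'\<in>{1..n} - {j}. card (cell_pts L v' h' \<pi> i j')) + 1)"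
      unfolding P_def by simp
  next
    fix i j assume i: "i \<in> {1..m}" and j: "j \<in> {1..n}" and pos: "card (cell_pts L v' h' \<pi> i j) > 0"
    have ne: "P i j \<noteq> {}" using pos unfolding P_def by auto
    define X where "X = {x\<in>{1..L}. in_col h' j (\<pi> x)}"
    have XC: "X - P i j = (\<Union>i'\<in>{1..m} - {i}. P i' j)"
    proof
      show "X - P i j \<subseteq> (\<Union>i'\<in>{1..m} - {i}. P i' j)"
      proof
        fix x assume x: "x \<in> X - P i j"
        then have "x \<in> {1..L}" unfolding X_def by auto
        then obtain i' where "i' \<in> {1..m}" "in_col v' i' x" using col_exists[OF gv] by blast
        then show "x \<in> (\<Union>i'\<in>{1..m} - {i}. P i' j)" using x unfolding X_def Pdef by auto
      qed
      show "(\<Union>i'\<in>{1..m} - {i}. P i' j) \<subseteq> X - P i j"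
        using col_unique[OF vm] i unfolding X_def Pdef by blast
    qed
    have "card (X - P i j) = (\<Sum>i'\<in>{1..m} - {i}. card (P i' j))"
      unfolding XC
    proof (rule card_UN_disjoint)
      show "\<forall>a\<in>{1..m} - {i}. \<forall>b\<in>{1..m} - {i}. a \<noteq> b \<longrightarrow> P a j \<inter> P b j = {}"
        using col_unique[OF vm] unfolding Pdef by blast
    qed (auto simp: fin)
    moreover have "card (P i j) \<le> 2 * l * (card (X - P i j) + 1)"
    proof (rule coilcore.core[OF inst_row[OF co]])
      show "P i j \<subseteq> X" "X \<subseteq> {1..L}" unfolding X_def Pdef by auto
      show "\<forall>x\<in>X. \<forall>y\<in>X. \<forall>z\<in>{1..L}. \<pi> x < \<pi> z \<and> \<pi> z < \<pi> y \<longrightarrow> z \<in> X"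
        unfolding X_def in_col_def by auto
      show "(\<forall>x\<in>P i j. \<forall>y\<in>P i j. \<pi> x < \<pi> y \<longrightarrow> id x < id y) \<or> (\<forall>x\<in>P i j. \<forall>y\<in>P i j. \<pi> x < \<pi> y \<longrightarrow> id y < id x)"
        using mon[OF i j ne] by (metis id_apply less_asym linorder_neqE_nat)
    qed
    ultimately show "card (cell_pts L v' h' \<pi> i j) \<le> 2 * l * ((\<Sum>i'\<in>{1..m} - {i}. card (cell_pts L v' h' \<pi> i' j)) + 1)"
      unfolding P_def by simp
  qed
qed

end
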